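(* Let $(X,d)$ be a compact doubling metric space with $\operatorname{diam}(X,d)=1/2$ and $\mathcal S$ a hyperbolic filling with parameters $a\ge\lambda\ge6$. Let $\rho:\mathcal S\to(0,\infty)$ satisfy (H1), (H2), (H3). Define $\Theta_\rho(x,x)=0$ and, for distinct $x,y\in X$, \[ \Theta_\rho(x,y)=\inf\Big\{\sum_{i=0}^{k-1}\pi(c(x_i,x_{i+1})):k\in\mathbb N,\ x_0=x,\ x_k=y,\ x_i\in X,\ x_i\neq x_{i+1}\Big\}. \] Then $\Theta_\rho$ is a metric on $X$ and $\Theta_\rho\in\mathcal J_p(X,d)$.
   Context: Hyperbolic filling: $X_0\subset X_1\subset\cdots$ increasing, $X_n$ maximal $a^{-n}$-separated in $X$ ($X_0=\{x_0\}$); $\mathcal S_n=\{(x,n):x\in X_n\}$, $\mathcal S=\bigcup_n\mathcal S_n$, $\pi_1(x,n)=x$, $\pi_2(x,n)=n$, $v_0=(x_0,0)$, $B_v=B(\pi_1(v),a^{-\pi_2(v)})$. Each $(x,n)$, $n\ge1$, has a fixed parent $(y,n-1)$ with $d(x,y)=\min_{z\in X_{n-1}}d(x,z)$. The genealogy $g(v)$ of $v\in\mathcal S_k$ is $(v_0,\dots,v_k=v)$ with $v_i$ the parent of $v_{i+1}$. Graph $(\mathcal S,D_2)$: edges between a vertex and its parent, and horizontal edges between distinct $(x,n),(y,n)$ with $B(x,\lambda a^{-n})\cap B(y,\lambda a^{-n})\ne\emptyset$. Paths are finite sequences of vertices with consecutive ones adjacent. $\pi(v)=\prod_{w\in g(v)}\rho(w)$,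 $L_\rho(\gamma)=\sum_{v\in\gamma}\pi(v)$. For distinct $x,y$: $\tilde n$ is the largest integer with $\{x,y\}\subset B(\tilde z,2a^{-\tilde n})$ for some $(\tilde z,\tilde n)\in\mathcal S$; $c(x,y)=\{(\tilde z,\tilde n)\in\mathcal S:\{x,y\}\subset B(\tilde z,2a^{-\tilde n})\}$; $\pi(c(x,y))=\max_{w\in c(x,y)}\pi(w)$. $\Gamma_n(x,y)$: paths $(v_1,\dots,v_k)$ with $\pi_2(v_1)=\pi_2(v_k)=n$, $x\in B_{v_1}$, $y\in B_{v_k}$. (H1) $0<\eta_-\le\rho\le\eta_+<1$. (H2) $\pi(v)\le K_0\pi(w)$ for horizontally adjacent $v,w$, some $K_0\ge1$. (H3) there is $K_1\ge1$ such that for distinct $x,y$ there is $n_0$ with $L_\rho(\gamma)\ge K_1^{-1}\pi(c(x,y))$ for $n\ge n_0$, $\gamma\in\Gamma_n(x,y)$. $\mathcal J_p(X,d)$: metrics $\theta$ on $X$ with $\theta(x,a)/\theta(x,b)\le C((d(x,a)/d(x,b))^\alpha\vee(d(x,a)/d(x,b))^{1/\alpha})$ for all $x,a,b$, $x\ne b$, for some $C,\alpha\ge1$. *)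

theory Defs
  imports "HOL-Analysis.Analysis"
begin

text \<open>Metric space: a carrier X inside a metric_space type, with d = dist.
Vertices of the hyperbolic filling are pairs (x, n) :: 'a \<times> nat.\<close>

definition doubling :: "'a::metric_space set \<Rightarrow> bool" where
  "doubling X \<longleftrightarrow> (\<exists>N::nat. \<forall>x\<in>X. \<forall>r>0. \<exists>F. F \<subseteq> X \<and> finite F \<and> card F \<le> N \<and>
      ball x (2*r) \<inter> X \<subseteq> (\<Union>y\<in>F. ball y r))"

definition separated :: "'a::metric_space set \<Rightarrow> real \<Rightarrow> bool" where
  "separated A r \<longleftrightarrow> (\<forall>x\<in>A. \<forall>y\<in>A. x \<noteq> y \<longrightarrow> r \<le> dist x y)"

definition max_separated :: "'a::metric_space set \<Rightarrow> 'a set \<Rightarrow> real \<Rightarrow> bool" where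
  "max_separated X A r \<longleftrightarrow> A \<subseteq> X \<and> separated A r \<and>
     (\<forall>B. A \<subseteq> B \<and> B \<subseteq> X \<and> separated B r \<longrightarrow> B = A)"

definition hyperbolic_filling ::
  "'a::metric_space set \<Rightarrow> real \<Rightarrow> real \<Rightarrow> (nat \<Rightarrow> 'a set) \<Rightarrow> 'a \<Rightarrow> ('a \<times> nat \<Rightarrow> 'a \<times> nat) \<Rightarrow> bool" where
  "hyperbolic_filling X a lam Xs x0 par \<longleftrightarrow>
     lam \<le> a \<and> 6 \<le> lam \<and> x0 \<in> X \<and> Xs 0 = {x0} \<and>
     (\<forall>n. Xs n \<subseteq> Xs (Suc n)) \<and>
     (\<forall>n. max_separated X (Xs n) (1 / a ^ n)) \<and>
     (\<forall>n x. x \<in> Xs (Suc n) \<longrightarrow>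
        snd (par (x, Suc n)) = n \<and> fst (par (x, Suc n)) \<in> Xs n \<and>
        (\<forall>z\<in>Xs n. dist x (fst (par (x, Suc n))) \<le> dist x z))"

definition fverts :: "(nat \<Rightarrow> 'a set) \<Rightarrow> ('a \<times> nat) set" where
  "fverts Xs = {(x, n). x \<in> Xs n}"

text \<open>pi(v) = product of rho over the genealogy v_0, ..., v_k = v, where v_{k-i} = par^i v.\<close>
definition pi_rho :: "('a \<times> nat \<Rightarrow> real) \<Rightarrow> ('a \<times> nat \<Rightarrow> 'a \<times> nat) \<Rightarrow> 'a \<times> nat \<Rightarrow> real" where
  "pi_rho rho par v = (\<Prod>i\<in>{0..snd v}. rho ((par ^^ i) v))"

definition horiz_adj ::
  "'a::metric_space set \<Rightarrow> real \<Rightarrow> real \<Rightarrow> (nat \<Rightarrow> 'a set) \<Rightarrow> 'a \<times> nat \<Rightarrow> 'a \<times> nat \<Rightarrow> bool" where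
  "horiz_adj X a lam Xs v w \<longleftrightarrow> v \<in> fverts Xs \<and> w \<in> fverts Xs \<and> snd v = snd w \<and> v \<noteq> w \<and>
     (\<exists>z\<in>X. dist (fst v) z < lam / a ^ snd v \<and> dist (fst w) z < lam / a ^ snd w)"

definition adjacent ::
  "'a::metric_space set \<Rightarrow> real \<Rightarrow> real \<Rightarrow> (nat \<Rightarrow> 'a set) \<Rightarrow> ('a \<times> nat \<Rightarrow> 'a \<times> nat) \<Rightarrow>
     'a \<times> nat \<Rightarrow> 'a \<times> nat \<Rightarrow> bool" where
  "adjacent X a lam Xs par v w \<longleftrightarrow> horiz_adj X a lam Xs v w \<or>
     (v \<in> fverts Xs \<and> w \<in> fverts Xs \<and>
       ((1 \<le> snd v \<and> w = par v) \<or> (1 \<le> snd w \<and> v = par w)))"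

definition is_fpath ::
  "'a::metric_space set \<Rightarrow> real \<Rightarrow> real \<Rightarrow> (nat \<Rightarrow> 'a set) \<Rightarrow> ('a \<times> nat \<Rightarrow> 'a \<times> nat) \<Rightarrow>
     ('a \<times> nat) list \<Rightarrow> bool" where
  "is_fpath X a lam Xs par \<gamma> \<longleftrightarrow> \<gamma> \<noteq> [] \<and> set \<gamma> \<subseteq> fverts Xs \<and>
     successively (adjacent X a lam Xs par) \<gamma>"

definition Gamma_n ::
  "'a::metric_space set \<Rightarrow> real \<Rightarrow> real \<Rightarrow> (nat \<Rightarrow> 'a set) \<Rightarrow> ('a \<times> nat \<Rightarrow> 'a \<times> nat) \<Rightarrow>
     nat \<Rightarrow> 'a \<Rightarrow> 'a \<Rightarrow> ('a \<times> nat) list set" where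
  "Gamma_n X a lam Xs par n x y = {\<gamma>. is_fpath X a lam Xs par \<gamma> \<and>
     snd (hd \<gamma>) = n \<and> snd (last \<gamma>) = n \<and>
     dist (fst (hd \<gamma>)) x < 1 / a ^ n \<and> dist (fst (last \<gamma>)) y < 1 / a ^ n}"

definition L_rho :: "('a \<times> nat \<Rightarrow> real) \<Rightarrow> ('a \<times> nat \<Rightarrow> 'a \<times> nat) \<Rightarrow> ('a \<times> nat) list \<Rightarrow> real" where
  "L_rho rho par \<gamma> = sum_list (map (pi_rho rho par) \<gamma>)"

definition ntilde :: "real \<Rightarrow> (nat \<Rightarrow> 'a::metric_space set) \<Rightarrow> 'a \<Rightarrow> 'a \<Rightarrow> nat" where
  "ntilde a Xs x y = (GREATEST n. \<exists>z\<in>Xs n. dist z x < 2 / a ^ n \<and> dist z y < 2 / a ^ n)"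

definition cset :: "real \<Rightarrow> (nat \<Rightarrow> 'a::metric_space set) \<Rightarrow> 'a \<Rightarrow> 'a \<Rightarrow> ('a \<times> nat) set" where
  "cset a Xs x y = {v \<in> fverts Xs. snd v = ntilde a Xs x y \<and>
      dist (fst v) x < 2 / a ^ snd v \<and> dist (fst v) y < 2 / a ^ snd v}"

definition pi_c ::
  "real \<Rightarrow> (nat \<Rightarrow> 'a::metric_space set) \<Rightarrow> ('a \<times> nat \<Rightarrow> real) \<Rightarrow> ('a \<times> nat \<Rightarrow> 'a \<times> nat) \<Rightarrow>
     'a \<Rightarrow> 'a \<Rightarrow> real" where
  "pi_c a Xs rho par x y = Max (pi_rho rho par ` cset a Xs x y)"

definition Theta ::
  "'a::metric_space set \<Rightarrow> real \<Rightarrow> (nat \<Rightarrow> 'a set) \<Rightarrow> ('a \<times> nat \<Rightarrow> real) \<Rightarrow> ('a \<times> nat \<Rightarrow> 'a \<times> nat) \<Rightarrow>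
     'a \<Rightarrow> 'a \<Rightarrow> real" where
  "Theta X a Xs rho par x y = (if x = y then 0 else
     Inf {sum_list (map (\<lambda>(p, q). pi_c a Xs rho par p q) (zip xs (tl xs))) | xs.
            2 \<le> length xs \<and> hd xs = x \<and> last xs = y \<and> set xs \<subseteq> X \<and>
            successively (\<noteq>) xs})"

definition is_metric_on :: "'a set \<Rightarrow> ('a \<Rightarrow> 'a \<Rightarrow> real) \<Rightarrow> bool" where
  "is_metric_on X \<theta> \<longleftrightarrow> (\<forall>x\<in>X. \<forall>y\<in>X. 0 \<le> \<theta> x y \<and> (\<theta> x y = 0 \<longleftrightarrow> x = y) \<and> \<theta> x y = \<theta> y x) \<and>
     (\<forall>x\<in>X. \<forall>y\<in>X. \<forall>z\<in>X. \<theta> x z \<le> \<theta> x y + \<theta> y z)"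

definition in_Jp :: "'a::metric_space set \<Rightarrow> ('a \<Rightarrow> 'a \<Rightarrow> real) \<Rightarrow> bool" where
  "in_Jp X \<theta> \<longleftrightarrow> is_metric_on X \<theta> \<and>
     (\<exists>C \<alpha>. 1 \<le> C \<and> 1 \<le> \<alpha> \<and> (\<forall>x\<in>X. \<forall>p\<in>X. \<forall>q\<in>X. x \<noteq> q \<longrightarrow>
        \<theta> x p / \<theta> x q \<le> C * max ((dist x p / dist x q) powr \<alpha>) ((dist x p / dist x q) powr (1 / \<alpha>))))"

end

theory Submission
  imports Defs
begin


lemma ar1: "(d::real) \<le> c * (p - q) \<Longrightarrow> 0 < q \<Longrightarrow> 0 \<le> c \<Longrightarrow> d \<le> c * p"
  by (smt (verit) mult_left_mono)

lemma ar2: "(A::real) \<le> B + C \<Longrightarrow> C \<le> D + E \<Longrightarrow> B \<le> 6/5*p \<Longrightarrow> D < s \<Longrightarrow> s \<le> 2*p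
  \<Longrightarrow> E < 2*p \<Longrightarrow> 0 \<le> p \<Longrightarrow> A < 6*p"
  by linarith

locale hfl =
  fixes X :: "'a::metric_space set" and a lam :: real and Xs :: "nat \<Rightarrow> 'a set" and x0 :: 'a
    and par :: "'a \<times> nat \<Rightarrow> 'a \<times> nat" and rho :: "'a \<times> nat \<Rightarrow> real"
    and em ep K0 :: real
  assumes cpt: "compact X" and diam: "diameter X = 1/2"
    and hf: "hyperbolic_filling X a lam Xs x0 par"
    and em: "0 < em" and emep: "em \<le> ep" and ep1: "ep < 1"
    and rb: "\<forall>v\<in>fverts Xs. em \<le> rho v \<and> rho v \<le> ep"
    and K0: "1 \<le> K0" and K0h: "\<forall>v w. horiz_adj X a lam Xs v w \<longrightarrow> pi_rho rho par v \<le> K0 * pi_rho rho par w"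
begin

abbreviation P where "P \<equiv> pi_rho rho par"

lemma a6: "6 \<le> a" and lam6: "6 \<le> lam" and lama: "lam \<le> a" and x0X: "x0 \<in> X"
  and Xs0: "Xs 0 = {x0}" and XsX: "Xs n \<subseteq> X" and Xsmono: "Xs n \<subseteq> Xs (Suc n)"
  and Xssep: "separated (Xs n) (1 / a ^ n)"
  and Xsmax: "\<And>B. Xs n \<subseteq> B \<Longrightarrow> B \<subseteq> X \<Longrightarrow> separated B (1 / a ^ n) \<Longrightarrow> B = Xs n"
  using hf unfolding hyperbolic_filling_def max_separated_def by auto

lemma apos: "0 < a" using a6 by simp
lemma rpos: "0 < 1 / a ^ n" using apos by simp
lemma r_Suc: "1 / a ^ Suc n = (1 / a ^ n) / a" using apos by simp
lemma r_mono: "m \<le> n \<Longrightarrow> 1 / a ^ n \<le> 1 / a ^ m"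
  using a6 by (intro divide_left_mono power_increasing) auto

lemma cover: assumes "x \<in> X" shows "\<exists>z\<in>Xs n. dist x z < 1 / a ^ n"
proof (rule ccontr)
  assume c: "\<not> ?thesis"
  have "separated (insert x (Xs n)) (1 / a ^ n)"
    using Xssep[of n] c unfolding separated_def by (auto simp: dist_commute)
  hence "insert x (Xs n) = Xs n" using Xsmax[where B="insert x (Xs n)" and n=n] XsX assms by auto
  hence "x \<in> Xs n" by auto
  thus False using c rpos[of n] by auto
qed

lemma par_props: assumes "x \<in> Xs (Suc n)"
  shows "snd (par (x, Suc n)) = n" "fst (par (x, Suc n)) \<in> Xs n"
    "dist x (fst (par (x, Suc n))) < 1 / a ^ n"
proof -
  show "snd (par (x, Suc n)) = n" "fst (par (x, Suc n)) \<in> Xs n"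
    using hf assms unfolding hyperbolic_filling_def by auto
  have mn: "\<forall>z\<in>Xs n. dist x (fst (par (x, Suc n))) \<le> dist x z"
    using hf assms unfolding hyperbolic_filling_def by auto
  obtain z where "z \<in> Xs n" "dist x z < 1 / a ^ n" using cover[of x n] assms XsX by blast
  with mn show "dist x (fst (par (x, Suc n))) < 1 / a ^ n" by force
qed

lemma fverts_iff: "v \<in> fverts Xs \<longleftrightarrow> fst v \<in> Xs (snd v)"
  unfolding fverts_def by (cases v) auto

lemma par_fv: assumes "v \<in> fverts Xs" "snd v = Suc n"
  shows "par v \<in> fverts Xs" "snd (par v) = n" "dist (fst v) (fst (par v)) < 1 / a ^ n"
proof -
  obtain x where v: "v = (x, Suc n)" using assms by (cases v) auto
  have x: "x \<in> Xs (Suc n)" using assms v fverts_iff by auto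
  show "par v \<in> fverts Xs" "snd (par v) = n" "dist (fst v) (fst (par v)) < 1 / a ^ n"
    using par_props[OF x] v fverts_iff by auto
qed

lemma P_Suc: assumes "v \<in> fverts Xs" "snd v = Suc n" shows "P v = rho v * P (par v)"
proof -
  have "P v = (\<Prod>i\<in>{0..Suc n}. rho ((par ^^ i) v))" using assms by (simp add: pi_rho_def)
  also have "\<dots> = rho v * (\<Prod>i\<in>{0..n}. rho ((par ^^ Suc i) v))"
    by (subst prod.atLeast0_atMost_Suc_shift) simp
  also have "(\<Prod>i\<in>{0..n}. rho ((par ^^ Suc i) v)) = P (par v)"
  proof -
    have "snd (par v) = n" using par_fv assms by auto
    thus ?thesis unfolding pi_rho_def by (simp add: funpow_Suc_right del: funpow.simps)
  qed
  finally show ?thesis .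
qed


lemma P_pos: "v \<in> fverts Xs \<Longrightarrow> 0 < P v"
proof (induction "snd v" arbitrary: v)
  case 0
  have "P v = rho v" using 0 by (simp add: pi_rho_def)
  moreover have "em \<le> rho v" using rb "0.prems" by blast
  ultimately show ?case using em by simp
next
  case (Suc n)
  have sv: "snd v = Suc n" using Suc by simp
  have "P v = rho v * P (par v)" using P_Suc[OF Suc.prems sv] .
  moreover have "0 < P (par v)" using Suc.hyps(1) par_fv[OF Suc.prems sv] by auto
  moreover have "0 < rho v" using rb em Suc.prems by force
  ultimately show ?case by simp
qed

lemma anc: "v \<in> fverts Xs \<Longrightarrow> snd v = k + j \<Longrightarrow>
  (par^^j) v \<in> fverts Xs \<and> snd ((par^^j) v) = k \<and>
  dist (fst v) (fst ((par^^j) v)) \<le> 6/5 * (1/a^k - 1/a^(k+j)) \<and>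
  em^j * P ((par^^j) v) \<le> P v \<and> P v \<le> ep^j * P ((par^^j) v)"
proof (induction j arbitrary: v)
  case 0
  then show ?case by simp
next
  case (Suc j)
  have sv: "snd v = Suc (k + j)" using Suc by simp
  note pv = par_fv[OF Suc.prems(1) sv]
  note IH = Suc.IH[OF pv(1) pv(2)]
  have eq: "(par^^Suc j) v = (par^^j) (par v)" by (simp add: funpow_Suc_right del: funpow.simps)
  define u where "u = (par^^j) (par v)"
  have d: "dist (fst v) (fst u) \<le> 6/5 * (1/a^k - 1/a^(k+Suc j))"
  proof -
    have "dist (fst v) (fst u) \<le> dist (fst v) (fst (par v)) + dist (fst (par v)) (fst u)"
      by (rule dist_triangle)
    also have "\<dots> \<le> 1/a^(k+j) + 6/5 * (1/a^k - 1/a^(k+j))"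
    proof -
      have IH3: "dist (fst (par v)) (fst u) \<le> 6/5 * (1/a^k - 1/a^(k+j))" using IH unfolding u_def by blast
      show ?thesis using add_mono[OF less_imp_le[OF pv(3)] IH3] .
    qed
    also have "\<dots> \<le> 6/5 * (1/a^k - 1/a^(k+Suc j))"
    proof -
      have "6/5 * (1/a^(k+Suc j)) \<le> 1/5 * (1/a^(k+j))"
        using a6 apos by (simp add: field_simps)
      thus ?thesis by (simp add: algebra_simps)
    qed
    finally show ?thesis .
  qed
  have Pv: "P v = rho v * P (par v)" using P_Suc Suc.prems sv by auto
  have r: "em \<le> rho v" "rho v \<le> ep" using rb Suc.prems by auto
  have Pp: "0 < P (par v)" "0 < P u" using P_pos pv IH u_def by auto
  have "em ^ Suc j * P u \<le> P v"
  proof -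
    have "em ^ Suc j * P u = em * (em^j * P u)" by simp
    also have "\<dots> \<le> rho v * P (par v)"
      using IH u_def r em Pp by (intro mult_mono) auto
    finally show ?thesis using Pv by simp
  qed
  moreover have "P v \<le> ep ^ Suc j * P u"
  proof -
    have "P v \<le> ep * (ep^j * P u)" unfolding Pv
      using IH u_def r em Pp by (intro mult_mono) auto
    thus ?thesis by simp
  qed
  ultimately show ?case using IH d eq u_def by simp
qed

lemma same_level: assumes "v \<in> fverts Xs" "w \<in> fverts Xs" "snd v = snd w"
  "dist (fst v) (fst w) < 6 / a ^ snd v"
  shows "v = w \<or> horiz_adj X a lam Xs v w" "P v \<le> K0 * P w"
proof -
  have "fst w \<in> X" using assms(2) XsX fverts_iff by auto
  moreover have "6 / a ^ snd v \<le> lam / a ^ snd v" using lam6 apos by (simp add: divide_right_mono)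
  moreover have "0 < lam / a ^ snd w" using lam6 apos by simp
  ultimately show vw: "v = w \<or> horiz_adj X a lam Xs v w"
    using assms unfolding horiz_adj_def
    by (intro disjCI conjI bexI[of _ "fst w"]) auto
  show "P v \<le> K0 * P w"
  proof (cases "v = w")
    case True
    then show ?thesis using P_pos[OF assms(1)] K0 by simp
  next
    case False
    then show ?thesis using vw K0h by blast
  qed
qed

lemma Xs_finite: "finite (Xs n)"
proof -
  have "\<not> z islimpt Xs n" for z
  proof
    assume l: "z islimpt Xs n"
    obtain x' where x': "x' \<in> Xs n" "x' \<noteq> z" "dist x' z < (1/a^n)/2"
      using l rpos[of n] unfolding islimpt_approachable by (meson half_gt_zero)
    obtain x'' where x'': "x'' \<in> Xs n" "x'' \<noteq> z" "dist x'' z < dist x' z"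
      using l x' unfolding islimpt_approachable by (meson zero_less_dist_iff)
    have "x' \<noteq> x''" using x'' by auto
    hence "1/a^n \<le> dist x' x''" using Xssep[of n] x' x'' unfolding separated_def by auto
    moreover have "dist x' x'' \<le> dist x' z + dist x'' z" by (rule dist_triangle2)
    ultimately have "1/a^n < 2 * dist x' z" using x'' by linarith
    moreover have "2 * dist x' z < 1/a^n" using x'(3) apos by (simp add: field_simps)
    ultimately show False by linarith
  qed
  hence "finite (X \<inter> Xs n)" using finite_not_islimpt_in_compact[OF cpt] by blast
  moreover have "X \<inter> Xs n = Xs n" using XsX by auto
  ultimately show ?thesis by simp
qed


lemma a1: "1 < a" using a6 by simp

lemma nt: assumes "x \<in> X" "y \<in> X" "x \<noteq> y"
  shows "\<exists>z\<in>Xs (ntilde a Xs x y). dist z x < 2 / a ^ ntilde a Xs x y \<and> dist z y < 2 / a ^ ntilde a Xs x y"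
    "\<And>n. (\<exists>z\<in>Xs n. dist z x < 2 / a ^ n \<and> dist z y < 2 / a ^ n) \<Longrightarrow> n \<le> ntilde a Xs x y"
proof -
  let ?Q = "\<lambda>n. \<exists>z\<in>Xs n. dist z x < 2 / a ^ n \<and> dist z y < 2 / a ^ n"
  have bX: "bounded X" using cpt compact_imp_bounded by auto
  have "dist x0 x \<le> 1/2" "dist x0 y \<le> 1/2"
    using diameter_bounded_bound[OF bX x0X] assms diam by auto
  hence Q0: "?Q 0" using Xs0 by auto
  have dp: "0 < dist x y" using assms by simp
  obtain b where b: "4 / dist x y < a ^ b" using real_arch_pow[OF a1] by blast
  have bd: "n \<le> b" if qn: "?Q n" for n
  proof -
    obtain z where z: "dist z x < 2 / a ^ n" "dist z y < 2 / a ^ n" using qn by blast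
    have "dist x y \<le> dist z x + dist z y" by (rule dist_triangle3)
    hence "dist x y < 4 / a ^ n" using z by simp
    hence "a ^ n < 4 / dist x y" using dp apos by (simp add: field_simps)
    hence "a ^ n < a ^ b" using b by simp
    thus "n \<le> b" using power_less_imp_less_exp[OF a1] by fastforce
  qed
  show "?Q (ntilde a Xs x y)" unfolding ntilde_def using GreatestI_nat[of ?Q 0 b] Q0 bd by blast
  show "\<And>n. ?Q n \<Longrightarrow> n \<le> ntilde a Xs x y" unfolding ntilde_def using Greatest_le_nat[of ?Q _ b] bd by blast
qed

lemma ntilde_sym: "ntilde a Xs x y = ntilde a Xs y x"
  unfolding ntilde_def by (simp add: conj_commute)

lemma cset_sym: "cset a Xs x y = cset a Xs y x"
  unfolding cset_def by (auto simp: ntilde_sym)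

lemma pi_c_sym: "pi_c a Xs rho par x y = pi_c a Xs rho par y x"
  unfolding pi_c_def by (simp add: cset_sym)

lemma cset_props: assumes "x \<in> X" "y \<in> X" "x \<noteq> y"
  shows "finite (cset a Xs x y)" "cset a Xs x y \<noteq> {}"
    "pi_c a Xs rho par x y \<in> P ` cset a Xs x y"
    "\<And>v. v \<in> cset a Xs x y \<Longrightarrow> P v \<le> pi_c a Xs rho par x y"
    "0 < pi_c a Xs rho par x y"
proof -
  let ?m = "ntilde a Xs x y"
  have "cset a Xs x y \<subseteq> (\<lambda>z. (z, ?m)) ` Xs ?m" unfolding cset_def fverts_def by auto
  thus fin: "finite (cset a Xs x y)" using Xs_finite finite_subset by blast
  obtain z where "z\<in>Xs ?m" "dist z x < 2 / a ^ ?m" "dist z y < 2 / a ^ ?m" using nt[OF assms] by blast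
  hence zc: "(z, ?m) \<in> cset a Xs x y" unfolding cset_def fverts_def by auto
  thus ne: "cset a Xs x y \<noteq> {}" by auto
  show "pi_c a Xs rho par x y \<in> P ` cset a Xs x y" unfolding pi_c_def
    using fin ne by (intro Max_in) auto
  show le: "\<And>v. v \<in> cset a Xs x y \<Longrightarrow> P v \<le> pi_c a Xs rho par x y" unfolding pi_c_def
    using fin by (intro Max_ge) auto
  have "(z, ?m) \<in> fverts Xs" using zc unfolding cset_def by auto
  thus "0 < pi_c a Xs rho par x y" using le[OF zc] P_pos by fastforce
qed

lemma dist_bounds: assumes "x \<in> X" "y \<in> X" "x \<noteq> y"
  shows "1 / a ^ Suc (ntilde a Xs x y) < dist x y" "dist x y < 4 / a ^ ntilde a Xs x y"
proof -
  let ?m = "ntilde a Xs x y"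
  obtain z where z: "z\<in>Xs ?m" "dist z x < 2 / a ^ ?m" "dist z y < 2 / a ^ ?m" using nt[OF assms] by blast
  have "dist x y \<le> dist z x + dist z y" by (rule dist_triangle3)
  thus "dist x y < 4 / a ^ ?m" using z by simp
  obtain w where w: "w \<in> Xs (Suc ?m)" "dist x w < 1 / a ^ Suc ?m" using cover assms by blast
  have "\<not> (dist w x < 2 / a ^ Suc ?m \<and> dist w y < 2 / a ^ Suc ?m)"
    using nt(2)[OF assms, of "Suc ?m"] w by auto
  moreover have "dist w x < 2 / a ^ Suc ?m"
  proof -
    have "1 / a ^ Suc ?m < 2 / a ^ Suc ?m" using apos by (simp add: divide_strict_right_mono)
    thus ?thesis using w by (simp add: dist_commute)
  qed
  ultimately have "2 / a ^ Suc ?m \<le> dist w y" by simp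
  moreover have "dist w y \<le> dist x w + dist x y" by (rule dist_triangle3)
  ultimately show "1 / a ^ Suc ?m < dist x y" using w by simp
qed

lemma cross: assumes "v \<in> fverts Xs" "w \<in> fverts Xs" "snd v \<le> snd w"
  "dist (fst v) x < 2 / a ^ snd v" "dist (fst w) x < 2 / a ^ snd w"
  shows "P w \<le> K0 * ep ^ (snd w - snd v) * P v" "em ^ (snd w - snd v) * P v \<le> K0 * P w"
proof -
  define m where "m = snd v"
  define j where "j = snd w - snd v"
  define u where "u = (par^^j) w"
  have sw: "snd w = m + j" using assms m_def j_def by simp
  note A = anc[OF assms(2) sw, folded u_def]
  have d1: "dist (fst w) (fst u) \<le> 6/5 * (1/a^m)"
  proof -
    have "dist (fst w) (fst u) \<le> 6/5 * (1/a^m - 1/a^(m+j))" using A by blast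
    moreover have "0 < 1/a^(m+j)" using rpos by blast
    ultimately show ?thesis by (rule ar1) simp
  qed
  have d2: "2 / a ^ snd w \<le> 2 * (1 / a ^ m)" using r_mono[of m "snd w"] sw by simp
  have "dist (fst u) (fst v) < 6 * (1 / a ^ m)"
  proof (rule ar2[OF dist_triangle[of "fst u" "fst v" "fst w"] dist_triangle[of "fst w" "fst v" x]])
    show "dist (fst u) (fst w) \<le> 6 / 5 * (1 / a ^ m)" using d1 by (simp add: dist_commute)
    show "dist (fst w) x < 2 / a ^ snd w" using assms(5) .
    show "2 / a ^ snd w \<le> 2 * (1 / a ^ m)" using d2 .
    show "dist x (fst v) < 2 * (1 / a ^ m)" using assms(4) m_def by (simp add: dist_commute)
    show "0 \<le> 1 / a ^ m" using apos by simp
  qed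
  hence "dist (fst u) (fst v) < 6 / a ^ m" by simp
  hence duv: "dist (fst u) (fst v) < 6 / a ^ snd u" using A by simp
  have duv': "dist (fst v) (fst u) < 6 / a ^ snd v" using duv A m_def by (simp add: dist_commute)
  have s1: "P u \<le> K0 * P v" using same_level(2)[of u v] A assms duv m_def by simp
  have s2: "P v \<le> K0 * P u" using same_level(2)[of v u] A assms duv' m_def by simp
  have Pu: "0 < P u" "0 < P v" using P_pos A assms by auto
  have "P w \<le> ep ^ j * P u" using A by simp
  also have "\<dots> \<le> ep ^ j * (K0 * P v)" using s1 em emep by (intro mult_left_mono) auto
  finally show "P w \<le> K0 * ep ^ (snd w - snd v) * P v" using j_def by (simp add: algebra_simps)
  have "em ^ j * P v \<le> em ^ j * (K0 * P u)" using s2 em by (intro mult_left_mono) auto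
  also have "\<dots> = K0 * (em^j * P u)" by simp
  also have "\<dots> \<le> K0 * P w" using A K0 by (intro mult_left_mono) auto
  finally show "em ^ (snd w - snd v) * P v \<le> K0 * P w" using j_def by simp
qed


end


lemma ar5: "(x::real) \<le> y \<Longrightarrow> 0 < y \<Longrightarrow> x \<le> 2 * y" by linarith

fun up :: "('b \<Rightarrow> 'b) \<Rightarrow> 'b \<Rightarrow> nat \<Rightarrow> 'b list" where
  "up f v 0 = [v]" | "up f v (Suc j) = v # up f (f v) j"

lemma up_ne: "up f v j \<noteq> []" by (cases j) auto
lemma up_hd: "hd (up f v j) = v" by (cases j) auto
lemma up_last: "last (up f v j) = (f^^j) v"
  by (induction j arbitrary: v) (auto simp: up_ne funpow_Suc_right simp del: funpow.simps)

fun cs :: "('b \<Rightarrow> 'b \<Rightarrow> 'c::comm_monoid_add) \<Rightarrow> 'b list \<Rightarrow> 'c" where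
  "cs f [] = 0" | "cs f [x] = 0" | "cs f (x # y # zs) = f x y + cs f (y # zs)"

lemma cs_zip: "sum_list (map (\<lambda>(p, q). f p q) (zip xs (tl xs))) = cs f xs"
  by (induction f xs rule: cs.induct) auto

lemma cs_bound: "successively (\<lambda>p q. f p q \<le> (B::nat) + cs f xs) xs"
proof (induction f xs rule: cs.induct)
  case (3 f x y zs)
  have "successively (\<lambda>p q. f p q \<le> B + cs f (x # y # zs)) (y # zs)"
    using 3 by (rule successively_mono) auto
  then show ?case by simp
qed auto

lemma succ_conj: "successively P xs \<Longrightarrow> successively Q xs \<Longrightarrow> successively (\<lambda>x y. P x y \<and> Q x y) xs"
  by (induction xs rule: induct_list012) auto

lemma sum_remdups_adj: "\<forall>v\<in>set xs. 0 \<le> f v \<Longrightarrow> sum_list (map f (remdups_adj xs)) \<le> sum_list (map f (xs::'b list)) + (0::real)"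
proof (induction xs rule: remdups_adj.induct)
  case (3 x y xs)
  show ?case
  proof (cases "x = y")
    case True
    then show ?thesis using 3 by simp
  next
    case False
    then show ?thesis using 3 by simp
  qed
qed auto

lemma ar3: "(L::real) * (1 - e) \<le> Pu * (1 - f) \<Longrightarrow> 0 \<le> f \<Longrightarrow> 0 \<le> Pu \<Longrightarrow> Pu \<le> K * c
  \<Longrightarrow> e < 1 \<Longrightarrow> L \<le> K * c / (1 - e)"
proof -
  assume h: "L * (1 - e) \<le> Pu * (1 - f)" "0 \<le> f" "0 \<le> Pu" "Pu \<le> K * c" "e < 1"
  have "Pu * (1 - f) \<le> Pu" using h by (simp add: mult_left_le)
  hence "L * (1 - e) \<le> K * c" using h by linarith
  thus ?thesis using h by (simp add: pos_le_divide_eq)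
qed

lemma ar4: "(Pv::real) \<le> e * Pu \<Longrightarrow> Lr * (1 - ep) \<le> Pu * (1 - e) \<Longrightarrow> 0 \<le> 1 - ep
  \<Longrightarrow> (Pv + Lr) * (1 - ep) \<le> Pu * (1 - e * ep)"
proof -
  assume h: "Pv \<le> e * Pu" "Lr * (1 - ep) \<le> Pu * (1 - e)" "0 \<le> 1 - ep"
  have "Pv * (1 - ep) \<le> e * Pu * (1 - ep)" using h by (intro mult_right_mono) auto
  thus ?thesis using h by (simp add: algebra_simps)
qed

context hfl begin

lemma adj_sym: "adjacent X a lam Xs par v w \<Longrightarrow> adjacent X a lam Xs par w v"
  unfolding adjacent_def horiz_adj_def by auto

lemma L_Cons: "L_rho rho par (v # vs) = P v + L_rho rho par vs"
  by (simp add: L_rho_def)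

lemma up_props: "v \<in> fverts Xs \<Longrightarrow> snd v = k + j \<Longrightarrow>
   set (up par v j) \<subseteq> fverts Xs \<and> successively (adjacent X a lam Xs par) (up par v j) \<and>
   L_rho rho par (up par v j) * (1 - ep) \<le> P ((par^^j) v) * (1 - ep ^ Suc j)"
proof (induction j arbitrary: v)
  case 0
  then show ?case by (simp add: L_rho_def)
next
  case (Suc j)
  have sv: "snd v = Suc (k + j)" using Suc by simp
  note pv = par_fv[OF Suc.prems(1) sv]
  note IH = Suc.IH[OF pv(1) pv(2)]
  have eq: "(par^^Suc j) v = (par^^j) (par v)" by (simp add: funpow_Suc_right del: funpow.simps)
  have adj: "adjacent X a lam Xs par v (par v)" unfolding adjacent_def using Suc.prems pv sv by auto
  have A: "P v \<le> ep ^ Suc j * P ((par^^Suc j) v)" using anc[OF Suc.prems(1), of k "Suc j"] sv by simp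
  have calc: "L_rho rho par (up par v (Suc j)) * (1 - ep) \<le> P ((par^^Suc j) v) * (1 - ep ^ Suc j * ep)"
    unfolding up.simps L_Cons
    by (rule ar4[OF A]) (use IH eq ep1 in auto)
  have eqn: "ep ^ Suc j * ep = ep ^ Suc (Suc j)" by simp
  note L1 = calc[unfolded eqn]
  have S: "successively (adjacent X a lam Xs par) (up par v (Suc j))"
    using IH adj by (simp add: up_hd up_ne successively_Cons)
  have St: "set (up par v (Suc j)) \<subseteq> fverts Xs" using IH Suc.prems by simp
  show ?case using S St L1 by blast
qed

lemma common_pt: assumes "v \<in> fverts Xs" "w \<in> fverts Xs" "snd v = snd w" "z \<in> X"
  "dist (fst v) z < 6 / a ^ snd v" "dist (fst w) z < 6 / a ^ snd v"
  shows "v = w \<or> adjacent X a lam Xs par v w"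
proof (cases "v = w")
  case False
  have le: "6 / a ^ snd v \<le> lam / a ^ snd v" using lam6 apos by (simp add: divide_right_mono)
  have "horiz_adj X a lam Xs v w" unfolding horiz_adj_def
  proof (intro conjI bexI[of _ z])
    show "dist (fst v) z < lam / a ^ snd v" using assms(5) le by linarith
    show "dist (fst w) z < lam / a ^ snd w" using assms(6) le assms(3) by simp
  qed (use assms False in auto)
  thus ?thesis unfolding adjacent_def by blast
qed simp

definition wsel :: "nat \<Rightarrow> 'a \<Rightarrow> 'a" where
  "wsel N p = (SOME z. z \<in> Xs N \<and> dist p z < 1 / a ^ N)"

lemma wsel: assumes "p \<in> X" shows "wsel N p \<in> Xs N \<and> dist p (wsel N p) < 1 / a ^ N"
proof -
  have "\<exists>z. z \<in> Xs N \<and> dist p z < 1 / a ^ N" using cover[OF assms] by blast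
  thus ?thesis unfolding wsel_def by (rule someI_ex)
qed

abbreviation R where "R \<equiv> \<lambda>v w. v = w \<or> adjacent X a lam Xs par v w"

lemma seg: assumes "p \<in> X" "q \<in> X" "p \<noteq> q" "ntilde a Xs p q \<le> N"
  shows "\<exists>\<gamma>. \<gamma> \<noteq> [] \<and> hd \<gamma> = (wsel N p, N) \<and> last \<gamma> = (wsel N q, N) \<and> set \<gamma> \<subseteq> fverts Xs \<and>
     successively R \<gamma> \<and> L_rho rho par \<gamma> \<le> 2 * (K0 * pi_c a Xs rho par p q / (1 - ep))"
proof -
  define m where "m = ntilde a Xs p q"
  define j where "j = N - m"
  have Nm: "N = m + j" using assms m_def j_def by simp
  obtain c where c: "c \<in> cset a Xs p q" "P c = pi_c a Xs rho par p q" using cset_props(3)[OF assms(1-3)] by auto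
  have cf: "c \<in> fverts Xs" "snd c = m" "dist (fst c) p < 2 / a ^ m" "dist (fst c) q < 2 / a ^ m"
    using c unfolding cset_def m_def by auto
  have cX: "fst c \<in> X" using cf XsX fverts_iff by auto
  have key: "\<And>t. t \<in> X \<Longrightarrow> dist (fst c) t < 2 / a ^ m \<Longrightarrow>
     set (up par (wsel N t, N) j) \<subseteq> fverts Xs \<and> successively R (up par (wsel N t, N) j) \<and>
     (par^^j) (wsel N t, N) \<in> fverts Xs \<and> snd ((par^^j) (wsel N t, N)) = m \<and>
     dist (fst ((par^^j) (wsel N t, N))) (fst c) < 6 / a ^ m \<and>
     L_rho rho par (up par (wsel N t, N) j) \<le> K0 * pi_c a Xs rho par p q / (1 - ep)"
  proof -
    fix t assume t: "t \<in> X" "dist (fst c) t < 2 / a ^ m"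
    define v where "v = (wsel N t, N)"
    define u where "u = (par^^j) v"
    have vf: "v \<in> fverts Xs" "snd v = m + j" using wsel[OF t(1)] v_def Nm fverts_iff by auto
    note U = up_props[OF vf, folded u_def]
    note A = anc[OF vf, folded u_def]
    have d1: "dist (fst v) (fst u) \<le> 6/5 * (1/a^m)"
    proof -
      have "dist (fst v) (fst u) \<le> 6/5 * (1/a^m - 1/a^(m+j))" using A by blast
      moreover have "0 < 1/a^(m+j)" using rpos by blast
      ultimately show ?thesis by (rule ar1) simp
    qed
    have du: "dist (fst u) (fst c) < 6 * (1 / a ^ m)"
    proof (rule ar2[OF dist_triangle[of "fst u" "fst c" "fst v"] dist_triangle[of "fst v" "fst c" t]])
      show "dist (fst u) (fst v) \<le> 6 / 5 * (1 / a ^ m)" using d1 by (simp add: dist_commute)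
      show "dist (fst v) t < 1 / a ^ N" using wsel[OF t(1)] v_def by (simp add: dist_commute)
      have "1 / a ^ N \<le> 1 / a ^ m" using r_mono[of m N] Nm by simp
      thus "1 / a ^ N \<le> 2 * (1 / a ^ m)" using rpos[of m] by (rule ar5)
      show "dist t (fst c) < 2 * (1 / a ^ m)" using t(2) by (simp add: dist_commute)
      show "0 \<le> 1 / a ^ m" using apos by simp
    qed
    have Pu: "P u \<le> K0 * P c"
      using same_level(2)[of u c] A cf du by simp
    have L: "L_rho rho par (up par v j) \<le> K0 * P c / (1 - ep)"
    proof -
      have Pu0: "0 \<le> P u" using P_pos A less_imp_le by blast
      have e0: "0 \<le> ep ^ Suc j" using em emep by simp
      have U3: "L_rho rho par (up par v j) * (1 - ep) \<le> P u * (1 - ep ^ Suc j)" using U by blast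
      show ?thesis by (rule ar3[OF U3 e0 Pu0 Pu ep1])
    qed
    have "successively R (up par v j)" using U by (rule successively_mono[OF conjunct1[OF conjunct2]]) auto
    thus "set (up par (wsel N t, N) j) \<subseteq> fverts Xs \<and> successively R (up par (wsel N t, N) j) \<and>
     (par^^j) (wsel N t, N) \<in> fverts Xs \<and> snd ((par^^j) (wsel N t, N)) = m \<and>
     dist (fst ((par^^j) (wsel N t, N))) (fst c) < 6 / a ^ m \<and>
     L_rho rho par (up par (wsel N t, N) j) \<le> K0 * pi_c a Xs rho par p q / (1 - ep)"
      using U A du L c(2) v_def u_def by simp
  qed
  note kp = key[OF assms(1) cf(3)] and kq = key[OF assms(2) cf(4)]
  define \<gamma> where "\<gamma> = up par (wsel N p, N) j @ rev (up par (wsel N q, N) j)"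
  have j1: "R (last (up par (wsel N p, N) j)) (hd (rev (up par (wsel N q, N) j)))"
    unfolding hd_rev up_last using common_pt[OF _ _ _ cX] kp kq by (simp add: dist_commute)
  have Rs: "successively (\<lambda>x y. R y x) (up par (wsel N q, N) j)"
  proof -
    have Rq: "successively R (up par (wsel N q, N) j)" using kq by blast
    show ?thesis by (rule successively_mono[OF Rq]) (use adj_sym in blast)
  qed
  have "successively R \<gamma>" unfolding \<gamma>_def successively_append_iff using kp Rs j1 by simp
  moreover have "L_rho rho par \<gamma> \<le> 2 * (K0 * pi_c a Xs rho par p q / (1 - ep))"
    using kp kq unfolding \<gamma>_def L_rho_def by (simp add: rev_map[symmetric] sum_list_rev)
  moreover have "\<gamma> \<noteq> []" "hd \<gamma> = (wsel N p, N)" "last \<gamma> = (wsel N q, N)" "set \<gamma> \<subseteq> fverts Xs"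
    unfolding \<gamma>_def using kp kq by (auto simp: up_ne up_hd last_rev)
  ultimately show ?thesis by blast
qed


lemma chain: "2 \<le> length xs \<Longrightarrow> set xs \<subseteq> X \<Longrightarrow> successively (\<noteq>) xs \<Longrightarrow>
  successively (\<lambda>p q. ntilde a Xs p q \<le> N) xs \<Longrightarrow>
  \<exists>\<gamma>. \<gamma> \<noteq> [] \<and> hd \<gamma> = (wsel N (hd xs), N) \<and> last \<gamma> = (wsel N (last xs), N) \<and> set \<gamma> \<subseteq> fverts Xs \<and>
     successively R \<gamma> \<and> L_rho rho par \<gamma> \<le> 2 * K0 / (1 - ep) * cs (pi_c a Xs rho par) xs"
proof (induction xs rule: induct_list012)
  case 1
  then show ?case by simp
next
  case (2 x)
  then show ?case by simp
next
  case (3 x y zs)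
  have xy: "x \<in> X" "y \<in> X" "x \<noteq> y" "ntilde a Xs x y \<le> N" using "3.prems" by simp_all
  obtain \<gamma>1 where g1: "\<gamma>1 \<noteq> []" "hd \<gamma>1 = (wsel N x, N)" "last \<gamma>1 = (wsel N y, N)" "set \<gamma>1 \<subseteq> fverts Xs"
    "successively R \<gamma>1" "L_rho rho par \<gamma>1 \<le> 2 * (K0 * pi_c a Xs rho par x y / (1 - ep))"
    using seg[OF xy] by blast
  define Kc where "Kc = 2 * K0 / (1 - ep)"
  have eqk: "2 * (K0 * pi_c a Xs rho par x y / (1 - ep)) = Kc * pi_c a Xs rho par x y"
    unfolding Kc_def by simp
  note g16 = g1(6)[unfolded eqk]
  show ?case
  proof (cases "zs = []")
    case True
    have "cs (pi_c a Xs rho par) (x # y # zs) = pi_c a Xs rho par x y" using True by simp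
    hence "L_rho rho par \<gamma>1 \<le> Kc * cs (pi_c a Xs rho par) (x # y # zs)"
      using g16 by simp
    moreover have "last (x # y # zs) = y" using True by simp
    ultimately show ?thesis using g1(1-5) unfolding Kc_def by (intro exI[of _ \<gamma>1]) simp
  next
    case False
    have l2: "2 \<le> length (y # zs)" using False by (cases zs) auto
    have p2: "set (y # zs) \<subseteq> X" "successively (\<noteq>) (y # zs)"
      "successively (\<lambda>p q. ntilde a Xs p q \<le> N) (y # zs)" using "3.prems" by simp_all
    obtain \<gamma>2 where g2: "\<gamma>2 \<noteq> []" "hd \<gamma>2 = (wsel N y, N)" "last \<gamma>2 = (wsel N (last (y#zs)), N)"
      "set \<gamma>2 \<subseteq> fverts Xs" "successively R \<gamma>2"
      "L_rho rho par \<gamma>2 \<le> Kc * cs (pi_c a Xs rho par) (y # zs)"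
      using "3.IH"(2)[OF l2 p2] unfolding Kc_def by auto
    have s12: "successively R (\<gamma>1 @ \<gamma>2)" unfolding successively_append_iff using g1(3,5) g2(2,5) by simp
    have L12: "L_rho rho par (\<gamma>1 @ \<gamma>2) = L_rho rho par \<gamma>1 + L_rho rho par \<gamma>2"
      by (simp add: L_rho_def)
    have cs3: "cs (pi_c a Xs rho par) (x # y # zs) = pi_c a Xs rho par x y + cs (pi_c a Xs rho par) (y # zs)"
      by simp
    have "L_rho rho par (\<gamma>1 @ \<gamma>2) \<le> Kc * cs (pi_c a Xs rho par) (x # y # zs)"
      unfolding L12 cs3 distrib_left using g16 g2(6) by (rule add_mono)
    moreover have "last (x # y # zs) = last (y # zs)" by simp
    ultimately show ?thesis using g1(1,2,4) g2(1,3,4) s12 unfolding Kc_def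
      by (intro exI[of _ "\<gamma>1 @ \<gamma>2"]) simp
  qed
qed


lemma lower: assumes H3: "\<forall>x\<in>X. \<forall>y\<in>X. x \<noteq> y \<longrightarrow> (\<exists>n0. \<forall>n\<ge>n0. \<forall>\<gamma>\<in>Gamma_n X a lam Xs par n x y.
               L_rho rho par \<gamma> \<ge> pi_c a Xs rho par x y / K1)"
  and xy: "x \<in> X" "y \<in> X" "x \<noteq> y"
  and xs: "2 \<le> length xs" "hd xs = x" "last xs = y" "set xs \<subseteq> X" "successively (\<noteq>) xs"
  shows "pi_c a Xs rho par x y / K1 \<le> 2 * K0 / (1 - ep) * cs (pi_c a Xs rho par) xs"
proof -
  obtain n0 where n0: "\<forall>n\<ge>n0. \<forall>\<gamma>\<in>Gamma_n X a lam Xs par n x y. L_rho rho par \<gamma> \<ge> pi_c a Xs rho par x y / K1"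
    using H3 xy by blast
  define N where "N = n0 + cs (\<lambda>p q. ntilde a Xs p q) xs"
  have sN: "successively (\<lambda>p q. ntilde a Xs p q \<le> N) xs" unfolding N_def by (rule cs_bound)
  obtain \<gamma> where g: "\<gamma> \<noteq> []" "hd \<gamma> = (wsel N x, N)" "last \<gamma> = (wsel N y, N)" "set \<gamma> \<subseteq> fverts Xs"
     "successively R \<gamma>" "L_rho rho par \<gamma> \<le> 2 * K0 / (1 - ep) * cs (pi_c a Xs rho par) xs"
    using chain[OF xs(1,4,5) sN] xs(2,3) by blast
  define \<gamma>' where "\<gamma>' = remdups_adj \<gamma>"
  have s1: "successively R \<gamma>'" unfolding \<gamma>'_def by (rule successively_remdups_adjI[OF g(5)])
  have s2: "successively (\<noteq>) \<gamma>'" using distinct_adj_remdups_adj[of \<gamma>] unfolding \<gamma>'_def distinct_adj_def .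
  have s3: "successively (adjacent X a lam Xs par) \<gamma>'"
    by (rule successively_mono[OF succ_conj[OF s1 s2]]) blast
  have h1: "\<gamma>' \<noteq> []" "set \<gamma>' \<subseteq> fverts Xs" "hd \<gamma>' = (wsel N x, N)" "last \<gamma>' = (wsel N y, N)"
    unfolding \<gamma>'_def using g by simp_all
  have "is_fpath X a lam Xs par \<gamma>'" unfolding is_fpath_def using h1 s3 by blast
  moreover have "dist (wsel N x) x < 1 / a ^ N" "dist (wsel N y) y < 1 / a ^ N"
    using wsel xy by (auto simp: dist_commute)
  ultimately have "\<gamma>' \<in> Gamma_n X a lam Xs par N x y"
    unfolding Gamma_n_def using h1 by simp
  moreover have "n0 \<le> N" unfolding N_def by simp
  ultimately have "pi_c a Xs rho par x y / K1 \<le> L_rho rho par \<gamma>'" using n0 by blast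
  also have "\<dots> \<le> L_rho rho par \<gamma>"
  proof -
    have "\<forall>v\<in>set \<gamma>. 0 \<le> P v" using g(4) P_pos less_imp_le by blast
    thus ?thesis unfolding L_rho_def \<gamma>'_def using sum_remdups_adj[of \<gamma> P] by simp
  qed
  finally show ?thesis using g(6) by linarith
qed

end


lemma cs_Cons: "ys \<noteq> [] \<Longrightarrow> cs f (x # ys) = f x (hd ys) + cs f ys"
  by (cases ys) auto

lemma cs_app: "xs \<noteq> [] \<Longrightarrow> ys \<noteq> [] \<Longrightarrow> cs f (xs @ ys) = cs f xs + f (last xs) (hd ys) + cs f ys"
proof (induction xs rule: induct_list012)
  case (2 x)
  then show ?case by (simp add: cs_Cons)
next
  case (3 x y zs)
  then show ?case by (simp add: add.assoc)
qed simp

lemma cs_rev: "(\<And>p q. f p q = f q p) \<Longrightarrow> cs f (rev xs) = cs f xs"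
proof (induction xs)
  case (Cons x xs)
  show ?case
  proof (cases "xs = []")
    case False
    have "cs f (rev (x # xs)) = cs f (rev xs @ [x])" by simp
    also have "\<dots> = cs f (rev xs) + f (last (rev xs)) x + cs f [x]"
      using False cs_app[of "rev xs" "[x]" f] by simp
    also have "\<dots> = cs f xs + f x (hd xs)" using Cons False by (simp add: last_rev)
    also have "\<dots> = cs f (x # xs)" using False by (simp add: cs_Cons add.commute)
    finally show ?thesis .
  qed simp
qed simp

context hfl begin

definition chains where
  "chains x y = {xs. 2 \<le> length xs \<and> hd xs = x \<and> last xs = y \<and> set xs \<subseteq> X \<and> successively (\<noteq>) xs}"

abbreviation pc where "pc \<equiv> pi_c a Xs rho par"
abbreviation Th where "Th \<equiv> Theta X a Xs rho par"

lemma Theta_eq: "Th x y = (if x = y then 0 else Inf (cs pc ` chains x y))"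
proof -
  have "{sum_list (map (\<lambda>(p, q). pc p q) (zip xs (tl xs))) | xs.
            2 \<le> length xs \<and> hd xs = x \<and> last xs = y \<and> set xs \<subseteq> X \<and>
            successively (\<noteq>) xs} = cs pc ` chains x y"
    unfolding chains_def cs_zip by blast
  thus ?thesis unfolding Theta_def by simp
qed

lemma cs_nonneg: "set xs \<subseteq> X \<Longrightarrow> successively (\<noteq>) xs \<Longrightarrow> 0 \<le> cs pc xs"
proof (induction pc xs rule: cs.induct)
  case (3 x y zs)
  have "0 < pc x y" using 3 cset_props(5)[of x y] by simp
  moreover have "0 \<le> cs pc (y # zs)" using 3 by simp
  ultimately show ?case by simp
qed auto

lemma chains_ne: "x \<in> X \<Longrightarrow> y \<in> X \<Longrightarrow> x \<noteq> y \<Longrightarrow> [x, y] \<in> chains x y"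
  unfolding chains_def by simp

lemma bdd: "bdd_below (cs pc ` chains x y)"
  unfolding chains_def by (rule bdd_belowI[of _ 0]) (auto intro: cs_nonneg)

lemma Theta_nonneg: assumes "x \<in> X" "y \<in> X" shows "0 \<le> Th x y"
proof (cases "x = y")
  case True
  then show ?thesis unfolding Theta_eq by auto
next
  case False
  have ne: "cs pc ` chains x y \<noteq> {}" using chains_ne[OF assms False] by blast
  have "\<And>s. s \<in> cs pc ` chains x y \<Longrightarrow> 0 \<le> s" by (auto intro!: cs_nonneg simp: chains_def)
  hence "0 \<le> Inf (cs pc ` chains x y)" using cInf_greatest[OF ne] by blast
  then show ?thesis unfolding Theta_eq using False by simp
qed

lemma Theta_upper: "x \<in> X \<Longrightarrow> y \<in> X \<Longrightarrow> x \<noteq> y \<Longrightarrow> Th x y \<le> pc x y"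
  unfolding Theta_eq using cInf_lower[OF imageI[OF chains_ne] bdd, of x y] by simp

lemma Theta_sym_le: assumes "x \<in> X" "y \<in> X" shows "Th y x \<le> Th x y"
proof (cases "x = y")
  case False
  have "Inf (cs pc ` chains y x) \<le> s" if sin: "s \<in> cs pc ` chains x y" for s
  proof -
    obtain xs where xs: "xs \<in> chains x y" "s = cs pc xs" using sin by blast
    have "rev xs \<in> chains y x" using xs(1) unfolding chains_def
      by (auto simp: hd_rev last_rev intro: successively_mono)
    moreover have "cs pc (rev xs) = s" using xs(2) by (simp add: cs_rev pi_c_sym)
    ultimately show ?thesis using cInf_lower[OF _ bdd] by force
  qed
  hence "Inf (cs pc ` chains y x) \<le> Inf (cs pc ` chains x y)"
    using chains_ne[OF assms False] by (intro cInf_greatest) auto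
  thus ?thesis unfolding Theta_eq using False by simp
qed simp

lemma Theta_sym: "x \<in> X \<Longrightarrow> y \<in> X \<Longrightarrow> Th x y = Th y x"
  using Theta_sym_le by (meson order_antisym)

lemma Theta_tri: assumes "x \<in> X" "y \<in> X" "z \<in> X" shows "Th x z \<le> Th x y + Th y z"
proof -
  consider "x = z" | "x = y" | "y = z" | "x \<noteq> y" "y \<noteq> z" "x \<noteq> z" by blast
  then show ?thesis
  proof cases
    case 1
    then show ?thesis using Theta_nonneg[OF assms(1,2)] Theta_nonneg[OF assms(2,3)] unfolding Theta_eq[of x z] by simp
  next
    case 2
    then show ?thesis unfolding Theta_eq[of x y] by simp
  next
    case 3
    then show ?thesis unfolding Theta_eq[of y z] by simp
  next
    case 4
    have key: "Th x z \<le> cs pc xs + cs pc ys" if xs: "xs \<in> chains x y" and ys: "ys \<in> chains y z" for xs ys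
    proof -
      obtain w ys' where ys': "ys = y # w # ys'" using ys unfolding chains_def
        by (cases ys; cases "tl ys") auto
      have "xs @ (w # ys') \<in> chains x z"
        using xs ys ys' unfolding chains_def by (auto simp: successively_append_iff hd_append)
      moreover have "cs pc (xs @ (w # ys')) = cs pc xs + cs pc ys"
        using xs ys' unfolding chains_def by (subst cs_app) auto
      ultimately show ?thesis unfolding Theta_eq[of x z] using 4 cInf_lower[OF _ bdd] by force
    qed
    have "Th x z - cs pc ys \<le> Th x y" if ys: "ys \<in> chains y z" for ys
    proof -
      have "Th x z - cs pc ys \<le> Inf (cs pc ` chains x y)"
        using chains_ne[OF assms(1,2) 4(1)] key[OF _ ys] by (intro cInf_greatest) force+
      thus ?thesis unfolding Theta_eq[of x y] using 4 by simp
    qed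
    hence "Th x z - Th x y \<le> Inf (cs pc ` chains y z)"
      using chains_ne[OF assms(2,3) 4(2)] by (intro cInf_greatest) (force simp: algebra_simps)+
    hence "Th x z - Th x y \<le> Th y z" unfolding Theta_eq[of y z] using 4 by simp
    thus ?thesis by simp
  qed
qed

end


lemma ar6: "(u::real) \<le> K * c \<Longrightarrow> 0 < K \<Longrightarrow> u / K \<le> c"
  by (simp add: pos_divide_le_eq mult.commute)

locale hfl3 = hfl +
  fixes K1 :: real
  assumes K1: "1 \<le> K1"
  and H3: "\<forall>x\<in>X. \<forall>y\<in>X. x \<noteq> y \<longrightarrow> (\<exists>n0. \<forall>n\<ge>n0. \<forall>\<gamma>\<in>Gamma_n X a lam Xs par n x y.
               L_rho rho par \<gamma> \<ge> pi_c a Xs rho par x y / K1)"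
begin

definition "M = K1 * (2 * K0 / (1 - ep))"

lemma M1: "1 \<le> M"
proof -
  have "1 \<le> 2 * K0 / (1 - ep)" using K0 ep1 em emep by (simp add: field_simps)
  thus ?thesis unfolding M_def using K1 by (metis mult_mono' mult_1 zero_le_one)
qed

lemma Theta_lower: assumes "x \<in> X" "y \<in> X" "x \<noteq> y" shows "pc x y / M \<le> Th x y"
proof -
  have Kc: "0 < 2 * K0 / (1 - ep)" using K0 ep1 by simp
  have "pc x y / M \<le> s" if sin: "s \<in> cs pc ` chains x y" for s
  proof -
    obtain xs where xs: "xs \<in> chains x y" "s = cs pc xs" using sin by blast
    have "pc x y / K1 \<le> 2 * K0 / (1 - ep) * cs pc xs"
      using lower[OF H3 assms] xs(1) unfolding chains_def by blast
    hence "pc x y / K1 / (2 * K0 / (1 - ep)) \<le> cs pc xs" using Kc by (rule ar6)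
    thus ?thesis using xs(2) unfolding M_def by (simp add: divide_divide_eq_left)
  qed
  hence "pc x y / M \<le> Inf (cs pc ` chains x y)"
    using chains_ne[OF assms] by (intro cInf_greatest) blast+
  thus ?thesis unfolding Theta_eq using assms by simp
qed

lemma Theta_pos: "x \<in> X \<Longrightarrow> y \<in> X \<Longrightarrow> x \<noteq> y \<Longrightarrow> 0 < Th x y"
  using Theta_lower[of x y] cset_props(5)[of x y] M1 by (smt (verit) divide_pos_pos)

lemma metric: "is_metric_on X Th"
  unfolding is_metric_on_def
  using Theta_nonneg Theta_sym Theta_tri Theta_pos by (auto simp: Theta_eq) (smt (verit))


lemma pc_ratio: assumes "x \<in> X" "p \<in> X" "q \<in> X" "x \<noteq> p" "x \<noteq> q"
  shows "ntilde a Xs x q \<le> ntilde a Xs x p \<Longrightarrow>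
           pc x p \<le> K0 * ep ^ (ntilde a Xs x p - ntilde a Xs x q) * pc x q"
    "ntilde a Xs x p < ntilde a Xs x q \<Longrightarrow>
           em ^ (ntilde a Xs x q - ntilde a Xs x p) * pc x p \<le> K0 * pc x q"
proof -
  obtain cp where cp: "cp \<in> cset a Xs x p" "P cp = pc x p" using cset_props(3)[OF assms(1,2,4)] by auto
  obtain cq where cq: "cq \<in> cset a Xs x q" "P cq = pc x q" using cset_props(3)[OF assms(1,3,5)] by auto
  have fp: "cp \<in> fverts Xs" "snd cp = ntilde a Xs x p" "dist (fst cp) x < 2 / a ^ snd cp"
    using cp(1) unfolding cset_def by auto
  have fq: "cq \<in> fverts Xs" "snd cq = ntilde a Xs x q" "dist (fst cq) x < 2 / a ^ snd cq"
    using cq(1) unfolding cset_def by auto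
  show "ntilde a Xs x q \<le> ntilde a Xs x p \<Longrightarrow>
           pc x p \<le> K0 * ep ^ (ntilde a Xs x p - ntilde a Xs x q) * pc x q"
    using cross(1)[OF fq(1) fp(1) _ fq(3) fp(3)] fp(2) fq(2) cp(2) cq(2) by simp
  show "ntilde a Xs x p < ntilde a Xs x q \<Longrightarrow>
           em ^ (ntilde a Xs x q - ntilde a Xs x p) * pc x p \<le> K0 * pc x q"
    using cross(2)[OF fp(1) fq(1) _ fp(3) fq(3)] fp(2) fq(2) cp(2) cq(2) by simp
qed

lemma ln_dist: assumes "x \<in> X" "y \<in> X" "x \<noteq> y"
  shows "- (real (ntilde a Xs x y) + 1) * ln a < ln (dist x y)"
    "ln (dist x y) < ln 4 - real (ntilde a Xs x y) * ln a"
proof -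
  note db = dist_bounds[OF assms]
  have dp: "0 < dist x y" using assms by simp
  have "ln (1 / a ^ Suc (ntilde a Xs x y)) < ln (dist x y)" using db(1) dp apos by simp
  moreover have "ln (1 / a ^ Suc (ntilde a Xs x y)) = - (real (ntilde a Xs x y) + 1) * ln a"
  proof -
    have "ln (1 / a ^ Suc (ntilde a Xs x y)) = - ln (a ^ Suc (ntilde a Xs x y))"
      using apos by (simp add: ln_div)
    also have "\<dots> = - (real (ntilde a Xs x y) + 1) * ln a" by (simp only: ln_realpow) (simp add: algebra_simps)
    finally show ?thesis .
  qed
  ultimately show "- (real (ntilde a Xs x y) + 1) * ln a < ln (dist x y)" by simp
  have "ln (dist x y) < ln (4 / a ^ ntilde a Xs x y)" using db(2) dp apos by simp
  moreover have "ln (4 / a ^ ntilde a Xs x y) = ln 4 - real (ntilde a Xs x y) * ln a"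
    using apos by (simp add: ln_div ln_realpow)
  ultimately show "ln (dist x y) < ln 4 - real (ntilde a Xs x y) * ln a" by simp
qed


definition "alpha = max 1 (max (ln a / (- ln ep)) (- ln em / ln a))"
definition "Cq = M * K0 * max (4 * a) ((4 * a) powr alpha)"

lemma alpha_facts: "1 \<le> alpha" "ln a / alpha \<le> - ln ep" "- ln em \<le> alpha * ln a"
proof -
  show al1: "1 \<le> alpha" unfolding alpha_def by simp
  have la: "0 < ln a" using a1 by simp
  have lep: "ln ep < 0" using em emep ep1 by (simp add: ln_less_zero)
  have "ln a / (- ln ep) \<le> alpha" unfolding alpha_def by (rule max.coboundedI2) simp
  moreover have cpos: "0 < - ln ep" using lep by simp
  ultimately have "ln a \<le> alpha * (- ln ep)" by (subst (asm) pos_divide_le_eq[OF cpos])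
  thus "ln a / alpha \<le> - ln ep" using al1 by (simp add: pos_divide_le_eq mult.commute)
  have "- ln em / ln a \<le> alpha" unfolding alpha_def by (rule max.coboundedI2) simp
  thus "- ln em \<le> alpha * ln a" by (subst (asm) pos_divide_le_eq[OF la])
qed

lemma Cq1: "1 \<le> Cq"
proof -
  have "1 \<le> max (4 * a) ((4 * a) powr alpha)" using a6 by simp
  moreover have "1 \<le> M * K0" using M1 K0 by (metis mult_mono' mult_1 zero_le_one)
  ultimately show ?thesis unfolding Cq_def by (metis mult_mono' mult_1 zero_le_one)
qed

lemma quasi: assumes "x \<in> X" "p \<in> X" "q \<in> X" "x \<noteq> q"
  shows "Th x p / Th x q \<le> Cq * max ((dist x p / dist x q) powr alpha) ((dist x p / dist x q) powr (1 / alpha))"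
proof (cases "p = x")
  case True
  have "Th x x = 0" unfolding Theta_eq[of x x] by simp
  then show ?thesis using True by simp
next
  case False
  hence xp: "x \<noteq> p" by simp
  define t where "t = dist x p / dist x q"
  define mp where "mp = ntilde a Xs x p"
  define mq where "mq = ntilde a Xs x q"
  define \<beta> where "\<beta> = 1 / alpha"
  note af = alpha_facts
  have b0: "0 < \<beta>" "\<beta> \<le> 1" using af(1) \<beta>_def by auto
  have bla: "\<beta> * ln a \<le> - ln ep" using af(2) \<beta>_def by simp
  have dp: "0 < dist x p" "0 < dist x q" using xp assms by auto
  have tp: "0 < t" using dp t_def by simp
  have lnt: "ln t = ln (dist x p) - ln (dist x q)" using dp t_def by (simp add: ln_div)
  have lp0: "- (real mp + 1) * ln a < ln (dist x p)" using ln_dist(1)[OF assms(1,2) xp] mp_def by simp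
  have lp: "- (real mp * ln a) - ln a < ln (dist x p)" using lp0 by (simp add: algebra_simps)
  have lq: "ln (dist x q) < ln 4 - real mq * ln a" using ln_dist(2)[OF assms(1,3,4)] mq_def by simp
  have l4a: "ln (4 * a) = ln 4 + ln a" using apos by (simp add: ln_mult)
  have l4a0: "0 \<le> ln 4 + ln a" using a6 l4a[symmetric] by simp
  have pcp: "0 < pc x p" "0 < pc x q" using cset_props(5) assms xp by auto
  have Tq: "pc x q / M \<le> Th x q" using Theta_lower[OF assms(1,3,4)] .
  have Tp: "Th x p \<le> pc x p" using Theta_upper[OF assms(1,2) xp] .
  have M0: "0 < M" using M1 by simp
  have R: "Th x p / Th x q \<le> M * (pc x p / pc x q)"
  proof -
    have "Th x p / Th x q \<le> pc x p / (pc x q / M)"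
      by (rule frac_le) (use Tp Tq pcp M0 Theta_nonneg[OF assms(1,2)] in auto)
    thus ?thesis using M0 pcp by (simp add: mult.commute)
  qed
  have MK: "0 \<le> M * K0" using M0 K0 by simp
  have maxT1: "t powr \<beta> \<le> max (t powr alpha) (t powr (1 / alpha))" using \<beta>_def by simp
  have maxT2: "t powr alpha \<le> max (t powr alpha) (t powr (1 / alpha))" by simp
  have max41: "4 * a \<le> max (4 * a) ((4 * a) powr alpha)" by simp
  have max42: "(4 * a) powr alpha \<le> max (4 * a) ((4 * a) powr alpha)" by simp
  show ?thesis
  proof (cases "mq \<le> mp")
    case True
    define k where "k = mp - mq"
    have rk: "real k = real mp - real mq" using True k_def by simp
    have B: "pc x p \<le> K0 * ep ^ k * pc x q" using pc_ratio(1)[OF assms(1-3) xp assms(4)] True mp_def mq_def k_def by simp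
    have B1: "pc x p / pc x q \<le> K0 * ep ^ k" using B pcp by (simp add: pos_divide_le_eq)
    have E: "ep ^ k \<le> 4 * a * t powr \<beta>"
    proof -
      have rka: "real k * ln a = real mp * ln a - real mq * ln a" using rk by (simp add: left_diff_distrib)
      have lt: "- real k * ln a - (ln 4 + ln a) \<le> ln t" using lp lq lnt rka by simp
      have h1: "\<beta> * (- real k * ln a - (ln 4 + ln a)) \<le> \<beta> * ln t"
        using lt b0 by (intro mult_left_mono) auto
      have h2: "real k * (\<beta> * ln a) \<le> - (real k * ln ep)"
        using mult_left_mono[OF bla, of "real k"] by simp
      have h3: "\<beta> * (ln 4 + ln a) \<le> ln 4 + ln a" using b0 l4a0 by (simp add: mult_left_le_one_le)
      have h4: "\<beta> * (- real k * ln a - (ln 4 + ln a)) = - (real k * (\<beta> * ln a)) - \<beta> * (ln 4 + ln a)"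
        by (simp add: algebra_simps)
      have "ln (ep ^ k) \<le> ln (4 * a * t powr \<beta>)"
        using h1 h2 h3 h4 tp apos l4a by (simp add: ln_realpow ln_mult)
      thus ?thesis using em emep tp apos by simp
    qed
    have "Th x p / Th x q \<le> M * (K0 * ep ^ k)" using R B1 M0 by (meson mult_left_mono order_trans less_imp_le)
    also have "\<dots> \<le> M * (K0 * (4 * a * t powr \<beta>))" using E M0 K0 by simp
    also have "\<dots> = (M * K0) * ((4 * a) * t powr \<beta>)" by simp
    also have "\<dots> \<le> (M * K0) * (max (4 * a) ((4 * a) powr alpha) * max (t powr alpha) (t powr (1 / alpha)))"
      using MK max41 maxT1 apos by (intro mult_left_mono mult_mono) auto
    finally show ?thesis unfolding Cq_def t_def by (simp add: mult.assoc)
  next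
    case False
    define k where "k = mq - mp"
    have rk: "real k = real mq - real mp" using False k_def by simp
    have B: "em ^ k * pc x p \<le> K0 * pc x q" using pc_ratio(2)[OF assms(1-3) xp assms(4)] False mp_def mq_def k_def by simp
    have emk: "0 < em ^ k" using em by simp
    have B1: "pc x p / pc x q \<le> K0 * (1 / em ^ k)" using B pcp emk by (simp add: field_simps)
    have E: "1 / em ^ k \<le> (4 * a) powr alpha * t powr alpha"
    proof -
      have rka: "real k * ln a = real mq * ln a - real mp * ln a" using rk by (simp add: left_diff_distrib)
      have lt: "real k * ln a - (ln 4 + ln a) \<le> ln t" using lp lq lnt rka by simp
      have h1: "alpha * (real k * ln a - (ln 4 + ln a)) \<le> alpha * ln t"
        using lt af(1) by (intro mult_left_mono) auto
      have h2: "- (real k * ln em) \<le> real k * (alpha * ln a)"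
        using mult_left_mono[OF af(3), of "real k"] by simp
      have h4: "alpha * (real k * ln a - (ln 4 + ln a)) = real k * (alpha * ln a) - alpha * (ln 4 + ln a)"
        by (simp add: algebra_simps)
      have "ln (1 / em ^ k) \<le> ln ((4 * a) powr alpha * t powr alpha)"
        using h1 h2 h4 tp apos l4a em by (simp add: ln_realpow ln_mult ln_div)
      thus ?thesis using em tp apos by simp
    qed
    have "Th x p / Th x q \<le> M * (K0 * (1 / em ^ k))" using R B1 M0 by (meson mult_left_mono order_trans less_imp_le)
    also have "\<dots> \<le> M * (K0 * ((4 * a) powr alpha * t powr alpha))"
      by (rule mult_left_mono[OF mult_left_mono[OF E]]) (use M0 K0 in auto)
    also have "\<dots> = (M * K0) * ((4 * a) powr alpha * t powr alpha)" by simp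
    also have "\<dots> \<le> (M * K0) * (max (4 * a) ((4 * a) powr alpha) * max (t powr alpha) (t powr (1 / alpha)))"
      using MK max42 maxT2 max41 apos by (intro mult_left_mono mult_mono) auto
    finally show ?thesis unfolding Cq_def t_def by (simp add: mult.assoc)
  qed
qed

end

theorem corollary3p7:
  fixes X :: "'a::metric_space set" and a lam :: real and Xs :: "nat \<Rightarrow> 'a set" and x0 :: 'a
    and par :: "'a \<times> nat \<Rightarrow> 'a \<times> nat" and rho :: "'a \<times> nat \<Rightarrow> real"
  assumes "compact X" and "doubling X" and "diameter X = 1/2"
    and "hyperbolic_filling X a lam Xs x0 par"
    and "\<forall>v\<in>fverts Xs. 0 < rho v"
    and H1: "\<exists>eta_minus eta_plus. 0 < eta_minus \<and> eta_minus \<le> eta_plus \<and> eta_plus < 1 \<and>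
               (\<forall>v\<in>fverts Xs. eta_minus \<le> rho v \<and> rho v \<le> eta_plus)"
    and H2: "\<exists>K0\<ge>1. \<forall>v w. horiz_adj X a lam Xs v w \<longrightarrow> pi_rho rho par v \<le> K0 * pi_rho rho par w"
    and H3: "\<exists>K1\<ge>1. \<forall>x\<in>X. \<forall>y\<in>X. x \<noteq> y \<longrightarrow> (\<exists>n0. \<forall>n\<ge>n0. \<forall>\<gamma>\<in>Gamma_n X a lam Xs par n x y.
               L_rho rho par \<gamma> \<ge> pi_c a Xs rho par x y / K1)"
  shows "is_metric_on X (Theta X a Xs rho par) \<and> in_Jp X (Theta X a Xs rho par)"
proof -
  obtain em ep where e: "0 < em" "em \<le> ep" "ep < 1" "\<forall>v\<in>fverts Xs. em \<le> rho v \<and> rho v \<le> ep"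
    using H1 by blast
  obtain K0 where k0: "1 \<le> K0" "\<forall>v w. horiz_adj X a lam Xs v w \<longrightarrow> pi_rho rho par v \<le> K0 * pi_rho rho par w"
    using H2 by blast
  obtain K1 where k1: "1 \<le> K1" "\<forall>x\<in>X. \<forall>y\<in>X. x \<noteq> y \<longrightarrow> (\<exists>n0. \<forall>n\<ge>n0. \<forall>\<gamma>\<in>Gamma_n X a lam Xs par n x y.
               L_rho rho par \<gamma> \<ge> pi_c a Xs rho par x y / K1)"
    using H3 by blast
  interpret I: hfl3 X a lam Xs x0 par rho em ep K0 K1
    by (unfold_locales) (use assms e k0 k1 in auto)
  have m: "is_metric_on X (Theta X a Xs rho par)" by (rule I.metric)
  moreover have "in_Jp X (Theta X a Xs rho par)"
    unfolding in_Jp_def using m I.Cq1 I.alpha_facts(1) I.quasi by blast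
  ultimately show ?thesis by blast
qed

end
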